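(* Let $n\ge 3$ and let $v_1,\dots,v_n:2^{[n]}\to\mathbb{R}$ be functions such that for every $i$: $v_i(S)\ge 0$; $v_i(S)=0$ if $i\notin S$; $v_i(S)\le v_i(R)$ whenever $S\subseteq R$; and $v_i(S\cup R)\le v_i(S)+v_i(R)$ for all $S,R\subseteq[n]$ with $i\in S\cap R$. Let $(p^*,S)$ be an optimal solution of $\mathcal{F}^{(3)}$, i.e. $S\subseteq[n]$, $|S|\ge 3$, $p^*\ge 0$, $v_i(S)\ge p^*$ for all $i\in S$, and $p^*|S|$ equals $\max\{c|S'| : c\ge 0, S'\subseteq[n], |S'|\ge 3, v_i(S')\ge c\ \forall i\in S'\}$. Let $A,B,C$ be a partition of $[n]$ (parts may be empty). For $X\in\{A,B\}$ define $r_X(C)=\max\{c\cdot|T| : c\ge 0,\ T\subseteq C,\ v_i(T\cup X)\ge c\text{ for all } i\in T\}$, let $r(C)=\max\{r_A(C),r_B(C)\}$ and $r_{\mathcal{F}}(C)=|S\cap C|\cdot p^*$. Then $r(C)\ge r_{\mathcal{F}}(C)/4$. *)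

theory Defs
  imports Complex_Main
begin

definition F3_feasible :: "nat \<Rightarrow> (nat \<Rightarrow> nat set \<Rightarrow> real) \<Rightarrow> real \<Rightarrow> nat set \<Rightarrow> bool" where
  "F3_feasible n v c S' \<longleftrightarrow> S' \<subseteq> {1..n} \<and> card S' \<ge> 3 \<and> c \<ge> 0 \<and> (\<forall>i\<in>S'. v i S' \<ge> c)"

definition F3_value :: "nat \<Rightarrow> (nat \<Rightarrow> nat set \<Rightarrow> real) \<Rightarrow> real" where
  "F3_value n v = Sup {c * real (card S') | c S'. F3_feasible n v c S'}"

definition F3_optimal :: "nat \<Rightarrow> (nat \<Rightarrow> nat set \<Rightarrow> real) \<Rightarrow> real \<Rightarrow> nat set \<Rightarrow> bool" where
  "F3_optimal n v p S \<longleftrightarrow> F3_feasible n v p S \<and> p * real (card S) = F3_value n v"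

definition r_X :: "(nat \<Rightarrow> nat set \<Rightarrow> real) \<Rightarrow> nat set \<Rightarrow> nat set \<Rightarrow> real" where
  "r_X v X C = Sup {c * real (card T) | c T. c \<ge> 0 \<and> T \<subseteq> C \<and> (\<forall>i\<in>T. v i (T \<union> X) \<ge> c)}"

end

theory Submission
  imports Defs
begin

lemma rX_lower:
  fixes v :: "nat \<Rightarrow> nat set \<Rightarrow> real"
  assumes nonneg: "\<And>i S. i \<in> {1..n} \<Longrightarrow> S \<subseteq> {1..n} \<Longrightarrow> v i S \<ge> 0"
    and mono: "\<And>i S R. i \<in> {1..n} \<Longrightarrow> S \<subseteq> R \<Longrightarrow> R \<subseteq> {1..n} \<Longrightarrow> v i S \<le> v i R"
    and X: "X \<subseteq> {1..n}" and Cs: "C \<subseteq> {1..n}"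
    and T: "T \<subseteq> C" and c: "c \<ge> 0" and good: "\<forall>i\<in>T. v i (T \<union> X) \<ge> c"
  shows "c * real (card T) \<le> r_X v X C"
proof -
  define M where "M = (\<Sum>j\<in>{1..n}. v j {1..n})"
  let ?Z = "{c * real (card T) | c T. c \<ge> 0 \<and> T \<subseteq> C \<and> (\<forall>i\<in>T. v i (T \<union> X) \<ge> c)}"
  have bdd: "bdd_above ?Z"
  proof (rule bdd_aboveI[of _ "M * real n"])
    fix z assume "z \<in> ?Z"
    then obtain d U where z: "z = d * real (card U)" and d: "d \<ge> 0" and U: "U \<subseteq> C"
      and g: "\<forall>i\<in>U. v i (U \<union> X) \<ge> d" by blast
    show "z \<le> M * real n"
    proof (cases "U = {}")
      case True
      have "M \<ge> 0" unfolding M_def by (rule sum_nonneg) (auto intro: nonneg)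
      then show ?thesis using True z by simp
    next
      case False
      then obtain i where i: "i \<in> U" by blast
      have iin: "i \<in> {1..n}" using i U Cs by blast
      have "d \<le> v i (U \<union> X)" using g i by blast
      also have "\<dots> \<le> v i {1..n}" using mono[OF iin, of "U \<union> X" "{1..n}"] U Cs X by blast
      also have "\<dots> \<le> M" unfolding M_def
        using iin by (intro member_le_sum) (auto intro: nonneg)
      finally have dM: "d \<le> M" .
      have cU: "card U \<le> n" using card_mono[of "{1..n}" U] U Cs by auto
      have "z \<le> d * real n" using z d cU by (simp add: mult_left_mono)
      also have "\<dots> \<le> M * real n" using dM by (simp add: mult_right_mono)
      finally show ?thesis .
    qed
  qed
  have "c * real (card T) \<in> ?Z" using T c good by blast
  then show ?thesis unfolding r_X_def using bdd by (rule cSup_upper)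
qed

theorem lemma2:
  fixes n :: nat and v :: "nat \<Rightarrow> nat set \<Rightarrow> real"
    and p :: real and S A B C :: "nat set"
  assumes n3: "n \<ge> 3"
    and nonneg: "\<And>i S. i \<in> {1..n} \<Longrightarrow> S \<subseteq> {1..n} \<Longrightarrow> v i S \<ge> 0"
    and zero_out: "\<And>i S. i \<in> {1..n} \<Longrightarrow> S \<subseteq> {1..n} \<Longrightarrow> i \<notin> S \<Longrightarrow> v i S = 0"
    and mono: "\<And>i S R. i \<in> {1..n} \<Longrightarrow> S \<subseteq> R \<Longrightarrow> R \<subseteq> {1..n} \<Longrightarrow> v i S \<le> v i R"
    and subadd: "\<And>i S R. i \<in> {1..n} \<Longrightarrow> S \<subseteq> {1..n} \<Longrightarrow> R \<subseteq> {1..n} \<Longrightarrow>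
                   i \<in> S \<inter> R \<Longrightarrow> v i (S \<union> R) \<le> v i S + v i R"
    and opt: "F3_optimal n v p S"
    and part: "A \<union> B \<union> C = {1..n}" "A \<inter> B = {}" "A \<inter> C = {}" "B \<inter> C = {}"
  shows "max (r_X v A C) (r_X v B C) \<ge> (real (card (S \<inter> C)) * p) / 4"
proof -
  have Ss: "S \<subseteq> {1..n}" and p0: "p \<ge> 0" and vS: "\<forall>i\<in>S. v i S \<ge> p"
    using opt unfolding F3_optimal_def F3_feasible_def by auto
  have As: "A \<subseteq> {1..n}" and Bs: "B \<subseteq> {1..n}" and Cs: "C \<subseteq> {1..n}" using part(1) by auto
  define T where "T = S \<inter> C"
  have finT: "finite T" unfolding T_def using Ss finite_subset by blast
  define F where "F = {Q. Q \<subseteq> T \<and> (\<forall>j\<in>Q. v j (Q \<union> B) \<ge> p/2)}"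
  have finF: "finite F" unfolding F_def using finT by (auto intro: finite_subset[of _ "Pow T"])
  have "{} \<in> F" unfolding F_def by auto
  then obtain Q where QF: "Q \<in> F" and Qmax: "\<forall>b\<in>F. Q \<subseteq> b \<longrightarrow> Q = b"
    using finite_has_maximal[OF finF] by blast
  have QT: "Q \<subseteq> T" and Qg: "\<forall>j\<in>Q. v j (Q \<union> B) \<ge> p/2" using QF unfolding F_def by auto
  define P where "P = T - Q"
  have Pg: "\<forall>i\<in>P. v i (P \<union> A) \<ge> p/2"
  proof
    fix i assume iP: "i \<in> P"
    show "v i (P \<union> A) \<ge> p/2"
    proof (rule ccontr)
      assume lt: "\<not> ?thesis"
      have iT: "i \<in> T" and iQ: "i \<notin> Q" using iP P_def by auto
      have iS: "i \<in> S" using iT T_def by auto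
      have iin: "i \<in> {1..n}" using iS Ss by blast
      have Y1: "P \<union> A \<subseteq> {1..n}" using P_def T_def Cs As by auto
      have Y2: "insert i (Q \<union> B) \<subseteq> {1..n}" using QT T_def Cs Bs iin by auto
      have "p \<le> v i S" using vS iS by blast
      also have "\<dots> \<le> v i ((P \<union> A) \<union> insert i (Q \<union> B))"
        apply (rule mono[OF iin])
        using Ss part(1) QT P_def T_def Y1 Y2 by auto
      also have "\<dots> \<le> v i (P \<union> A) + v i (insert i (Q \<union> B))"
        using subadd[OF iin Y1 Y2] iP by auto
      finally have big: "v i (insert i (Q \<union> B)) \<ge> p/2" using lt by linarith
      have "insert i Q \<in> F"
        unfolding F_def
      proof (intro CollectI conjI ballI)
        show "insert i Q \<subseteq> T" using iT QT by auto
        fix j assume j: "j \<in> insert i Q"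
        show "v j (insert i Q \<union> B) \<ge> p/2"
        proof (cases "j = i")
          case True then show ?thesis using big by simp
        next
          case False
          then have jQ: "j \<in> Q" using j by auto
          have jin: "j \<in> {1..n}" using jQ QT T_def Ss by auto
          have "p/2 \<le> v j (Q \<union> B)" using Qg jQ by blast
          also have "\<dots> \<le> v j (insert i Q \<union> B)"
            using mono[OF jin, of "Q \<union> B" "insert i Q \<union> B"] Y2 by auto
          finally show ?thesis .
        qed
      qed
      with Qmax iQ show False by blast
    qed
  qed
  have p2: "p/2 \<ge> 0" using p0 by simp
  have rA: "(p/2) * real (card P) \<le> r_X v A C"
    by (rule rX_lower[where n=n and v=v and X=A and C=C and T=P and c="p/2", OF nonneg mono As Cs _ p2 Pg]) (auto simp: P_def T_def)
  have rB: "(p/2) * real (card Q) \<le> r_X v B C"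
    by (rule rX_lower[where n=n and v=v and X=B and C=C and T=Q and c="p/2", OF nonneg mono Bs Cs _ p2 Qg]) (use QT T_def in auto)
  have cardT: "card T = card P + card Q"
    unfolding P_def using card_Diff_subset[OF finite_subset[OF QT finT] QT] card_mono[OF finT QT] by simp
  have "real (card (S \<inter> C)) * p / 4 = ((p/2) * real (card P) + (p/2) * real (card Q)) / 2"
    using cardT T_def by (simp add: field_simps)
  also have "\<dots> \<le> max (r_X v A C) (r_X v B C)" using rA rB by (simp add: max_def)
  finally show ?thesis .
qed

end
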